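(* Assume $n\ge 3t+1$. In any execution of COOL, if $\eta^{[1]}=2$ then $\eta^{[3]}\le 1$.
   Context: Setting. $n$ processors indexed by $[1:n]$, pairwise joined by reliable private synchronous channels; recipients know senders. At most $t$ processors are dishonest, controlled by an adversary who may make them deviate arbitrarily (missing values replaced by a fixed default); the others are honest. Processor $i$ holds an $\ell$-bit initial message $\boldsymbol w_i$. $\phi$ is a default value different from every $\ell$-bit message. Logarithms are base 2. Code. $k=\lfloor t/5\rfloor+1$, $c=\lceil \max\{\ell,(t/5+1)\log(n+1)\}/k\rceil$. Messages are zero-padded to $kc$ bits and viewed in $GF(2^c)^k$. Integers in $[1:n]$ are identified with distinct nonzero elements of $GF(2^c)$; $\boldsymbol h_i\in GF(2^c)^k$ has entries $h_{i,j}=\prod_{p\in[1:k],\,p\ne j}\frac{i-p}{j-p}$ (field arithmetic). COOL, Phases 1–3 (honest processor $i$). Initialization: updated message $\boldsymbol w^{(i)}:=\boldsymbol w_i$, $y^{(i)}_j:=\boldsymbol h_j^{\mathsf T}\boldsymbol w_i$, $u_i(i):=1$. Phase 1. (a) Send $(y^{(i)}_j,y^{(i)}_i)$ to each $j\ne i$. (b) For $j\ne i$, link indicator $u_i(j):=1$ if the pair received from $j$ equals $(y^{(i)}_i,y^{(i)}_j)$, else $0$. Success indicator $s_i:=1$ if $\sum_{j=1}^n u_i(j)\ge n-t$; otherwise $s_i:=0$ and $\boldsymbol w^{(i)}:=\phi$. (c) Send $s_i$ to all; each processor records the indicator received from each $j$ (own for itself) and forms $\mathcal S_1=\{j:s_j=1\}$,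 $\mathcal S_0=\{j:s_j=0\}$ (views may differ between processors). Phase 2. If $s_i=1$: set $u_i(j):=0$ for all $j\in\mathcal S_0$; if now $\sum_j u_i(j)<n-t$, set $s_i:=0$, $\boldsymbol w^{(i)}:=\phi$ and send $s_i=0$ to all. Everyone overwrites recorded indicators with newly received ones and recomputes $\mathcal S_0,\mathcal S_1$. Phase 3 begins by repeating the steps of Phase 2 once more (followed by a vote and binary agreement, irrelevant here). Notation. For $p\in\{1,2,3\}$, $s^{[p]}_i$ is the value of honest processor $i$'s success indicator at the end of (the indicator-updating steps of) Phase $p$, and $\eta^{[p]}$ is the number of distinct values in $\{\boldsymbol w_i: i\text{ honest},\ s^{[p]}_i=1\}$ (initial messages). *)

theory Defs
  imports Main
begin

text \<open>Code parameters. The field GF(2^c) is abstracted to an arbitrary field 'f;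
  processor indices i in [1:n] are identified with field elements via pt
  (assumed injective with nonzero values on [1:n]).\<close>

definition kpar :: "nat \<Rightarrow> nat" where
  "kpar t = t div 5 + 1"

definition hent :: "(nat \<Rightarrow> 'f::field) \<Rightarrow> nat \<Rightarrow> nat \<Rightarrow> nat \<Rightarrow> 'f" where
  "hent pt k i j = (\<Prod>p\<in>{1..k} - {j}. (pt i - pt p) / (pt j - pt p))"

definition code :: "(nat \<Rightarrow> 'f::field) \<Rightarrow> nat \<Rightarrow> (nat \<Rightarrow> 'f) \<Rightarrow> nat \<Rightarrow> 'f" where
  "code pt k v j = (\<Sum>p\<in>{1..k}. hent pt k j p * v p)"

definition cool_y :: "nat \<Rightarrow> (nat \<Rightarrow> 'f::field) \<Rightarrow> ('m \<Rightarrow> nat \<Rightarrow> 'f) \<Rightarrow> (nat \<Rightarrow> 'm)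
    \<Rightarrow> nat \<Rightarrow> nat \<Rightarrow> 'f" where
  "cool_y t pt enc w i j = code pt (kpar t) (enc (w i)) j"

text \<open>Execution: H = honest set, A1 j i = pair sent by dishonest j to i in Phase 1(a),
  B1 j i / B2 j i = indicator received by i from dishonest j in Phase 1(c) / Phase 2.
  Link indicator u_i(j) after Phase 1 for honest i.\<close>
definition cool_link1 :: "nat \<Rightarrow> (nat \<Rightarrow> 'f::field) \<Rightarrow> ('m \<Rightarrow> nat \<Rightarrow> 'f) \<Rightarrow> (nat \<Rightarrow> 'm)
    \<Rightarrow> nat set \<Rightarrow> (nat \<Rightarrow> nat \<Rightarrow> 'f \<times> 'f) \<Rightarrow> nat \<Rightarrow> nat \<Rightarrow> bool" where
  "cool_link1 t pt enc w H A1 i j =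
     (j = i \<or>
      (if j \<in> H then (cool_y t pt enc w j i, cool_y t pt enc w j j) else A1 j i)
        = (cool_y t pt enc w i i, cool_y t pt enc w i j))"

definition cool_s1 :: "nat \<Rightarrow> nat \<Rightarrow> (nat \<Rightarrow> 'f::field) \<Rightarrow> ('m \<Rightarrow> nat \<Rightarrow> 'f) \<Rightarrow> (nat \<Rightarrow> 'm)
    \<Rightarrow> nat set \<Rightarrow> (nat \<Rightarrow> nat \<Rightarrow> 'f \<times> 'f) \<Rightarrow> nat \<Rightarrow> bool" where
  "cool_s1 n t pt enc w H A1 i =
     (n - t \<le> card {j \<in> {1..n}. cool_link1 t pt enc w H A1 i j})"

definition cool_rec1 :: "nat \<Rightarrow> nat \<Rightarrow> (nat \<Rightarrow> 'f::field) \<Rightarrow> ('m \<Rightarrow> nat \<Rightarrow> 'f) \<Rightarrow> (nat \<Rightarrow> 'm)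
    \<Rightarrow> nat set \<Rightarrow> (nat \<Rightarrow> nat \<Rightarrow> 'f \<times> 'f) \<Rightarrow> (nat \<Rightarrow> nat \<Rightarrow> bool) \<Rightarrow> nat \<Rightarrow> nat \<Rightarrow> bool" where
  "cool_rec1 n t pt enc w H A1 B1 i j =
     (if j \<in> H then cool_s1 n t pt enc w H A1 j else B1 j i)"

definition cool_s2 :: "nat \<Rightarrow> nat \<Rightarrow> (nat \<Rightarrow> 'f::field) \<Rightarrow> ('m \<Rightarrow> nat \<Rightarrow> 'f) \<Rightarrow> (nat \<Rightarrow> 'm)
    \<Rightarrow> nat set \<Rightarrow> (nat \<Rightarrow> nat \<Rightarrow> 'f \<times> 'f) \<Rightarrow> (nat \<Rightarrow> nat \<Rightarrow> bool) \<Rightarrow> nat \<Rightarrow> bool" where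
  "cool_s2 n t pt enc w H A1 B1 i =
     (cool_s1 n t pt enc w H A1 i \<and>
      n - t \<le> card {j \<in> {1..n}. cool_link1 t pt enc w H A1 i j \<and>
                                  cool_rec1 n t pt enc w H A1 B1 i j})"

definition cool_rec2 :: "nat \<Rightarrow> nat \<Rightarrow> (nat \<Rightarrow> 'f::field) \<Rightarrow> ('m \<Rightarrow> nat \<Rightarrow> 'f) \<Rightarrow> (nat \<Rightarrow> 'm)
    \<Rightarrow> nat set \<Rightarrow> (nat \<Rightarrow> nat \<Rightarrow> 'f \<times> 'f) \<Rightarrow> (nat \<Rightarrow> nat \<Rightarrow> bool) \<Rightarrow> (nat \<Rightarrow> nat \<Rightarrow> bool)
    \<Rightarrow> nat \<Rightarrow> nat \<Rightarrow> bool" where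
  "cool_rec2 n t pt enc w H A1 B1 B2 i j =
     (if j \<in> H then cool_s2 n t pt enc w H A1 B1 j else B2 j i)"

definition cool_s3 :: "nat \<Rightarrow> nat \<Rightarrow> (nat \<Rightarrow> 'f::field) \<Rightarrow> ('m \<Rightarrow> nat \<Rightarrow> 'f) \<Rightarrow> (nat \<Rightarrow> 'm)
    \<Rightarrow> nat set \<Rightarrow> (nat \<Rightarrow> nat \<Rightarrow> 'f \<times> 'f) \<Rightarrow> (nat \<Rightarrow> nat \<Rightarrow> bool) \<Rightarrow> (nat \<Rightarrow> nat \<Rightarrow> bool)
    \<Rightarrow> nat \<Rightarrow> bool" where
  "cool_s3 n t pt enc w H A1 B1 B2 i =
     (cool_s2 n t pt enc w H A1 B1 i \<and>
      n - t \<le> card {j \<in> {1..n}. cool_link1 t pt enc w H A1 i j \<and>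
                                  cool_rec1 n t pt enc w H A1 B1 i j \<and>
                                  cool_rec2 n t pt enc w H A1 B1 B2 i j})"

definition eta :: "(nat \<Rightarrow> 'm) \<Rightarrow> nat set \<Rightarrow> (nat \<Rightarrow> bool) \<Rightarrow> nat" where
  "eta w H s = card (w ` {i \<in> H. s i})"

end

theory Submission
  imports Defs "HOL-Computational_Algebra.Polynomial"
begin


lemma hent_delta:
  fixes pt :: "nat \<Rightarrow> 'f::field"
  assumes inj: "inj_on pt {1..k}" and j: "j \<in> {1..k}" and p: "p \<in> {1..k}"
  shows "hent pt k j p = (if j = p then 1 else 0)"
proof (cases "j = p")
  case True
  have "\<And>q. q \<in> {1..k} - {p} \<Longrightarrow> (pt j - pt q) / (pt p - pt q) = 1"
  proof -
    fix q assume q: "q \<in> {1..k} - {p}"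
    have "pt p \<noteq> pt q" using inj q p by (metis DiffE inj_onD singletonI)
    then show "(pt j - pt q) / (pt p - pt q) = 1" using True by simp
  qed
  then show ?thesis unfolding hent_def using True by simp
next
  case False
  have "j \<in> {1..k} - {p}" using j False by simp
  moreover have "(pt j - pt j) / (pt p - pt j) = 0" by simp
  ultimately have "\<exists>q\<in>{1..k} - {p}. (pt j - pt q) / (pt p - pt q) = 0" by blast
  then show ?thesis unfolding hent_def using False by (simp add: prod_zero_iff)
qed

lemma code_at_base:
  fixes pt :: "nat \<Rightarrow> 'f::field"
  assumes inj: "inj_on pt {1..k}" and j: "j \<in> {1..k}"
  shows "code pt k v j = v j"
proof -
  have "code pt k v j = (\<Sum>p\<in>{1..k}. (if j = p then v p else 0))"
    unfolding code_def using hent_delta[OF inj j] by (intro sum.cong) auto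
  also have "\<dots> = v j" using j by simp
  finally show ?thesis .
qed

definition lagp :: "(nat \<Rightarrow> 'f::field) \<Rightarrow> nat \<Rightarrow> (nat \<Rightarrow> 'f) \<Rightarrow> 'f poly" where
  "lagp pt k v = (\<Sum>p\<in>{1..k}. smult (v p)
      (\<Prod>q\<in>{1..k} - {p}. [:- pt q / (pt p - pt q), 1 / (pt p - pt q):]))"

lemma poly_lagp: "poly (lagp pt k v) (pt j) = code pt k v j"
  unfolding lagp_def code_def hent_def
  by (simp add: poly_sum poly_prod mult.commute diff_divide_distrib)

lemma degree_lagp: "degree (lagp pt k v) \<le> k - 1"
  unfolding lagp_def
proof (rule degree_sum_le)
  fix p assume p: "p \<in> {1..k}"
  let ?f = "\<lambda>q. [:- pt q / (pt p - pt q), 1 / (pt p - pt q):]"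
  have "degree (\<Prod>q\<in>{1..k} - {p}. ?f q) \<le> sum (degree \<circ> ?f) ({1..k} - {p})"
    by (rule degree_prod_sum_le) simp
  also have "\<dots> \<le> sum (\<lambda>_. 1::nat) ({1..k} - {p})"
    by (intro sum_mono) simp
  also have "\<dots> = k - 1" using p by simp
  finally show "degree (smult (v p) (\<Prod>q\<in>{1..k} - {p}. ?f q)) \<le> k - 1"
    using degree_smult_le order_trans by blast
qed simp


lemma rs_bound:
  fixes pt :: "nat \<Rightarrow> 'f::field" and enc :: "'m \<Rightarrow> nat \<Rightarrow> 'f"
  assumes inj: "inj_on pt {1..n}" and Kn: "K \<le> n"
    and encinj: "\<forall>a b. (\<forall>p\<in>{1..K}. enc a p = enc b p) \<longrightarrow> a = b"
    and ab: "a \<noteq> b"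
  shows "card {j\<in>{1..n}. code pt K (enc a) j = code pt K (enc b) j} < K"
proof (rule ccontr)
  let ?Z = "{j\<in>{1..n}. code pt K (enc a) j = code pt K (enc b) j}"
  assume "\<not> card ?Z < K"
  hence cZ: "K \<le> card ?Z" by simp
  have injZ: "inj_on pt ?Z" using inj by (rule inj_on_subset) auto
  have cA: "card (pt ` ?Z) = card ?Z" using card_image[OF injZ] .
  have eq: "lagp pt K (enc a) = lagp pt K (enc b)"
  proof (rule poly_eqI_degree[where A = "pt ` ?Z"])
    fix x assume "x \<in> pt ` ?Z"
    then show "poly (lagp pt K (enc a)) x = poly (lagp pt K (enc b)) x"
      by (auto simp: poly_lagp)
  next
    have "degree (lagp pt K (enc a)) \<le> K - 1" by (rule degree_lagp)
    moreover have "K \<ge> 1" proof (rule ccontr)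
      assume "\<not> K \<ge> 1" hence "K = 0" by simp
      then have "a = b" using encinj by simp
      then show False using ab by simp
    qed
    ultimately show "degree (lagp pt K (enc a)) < card (pt ` ?Z)" using cA cZ by linarith
  next
    have "degree (lagp pt K (enc b)) \<le> K - 1" by (rule degree_lagp)
    moreover have "K \<ge> 1" proof (rule ccontr)
      assume "\<not> K \<ge> 1" hence "K = 0" by simp
      then have "a = b" using encinj by simp
      then show False using ab by simp
    qed
    ultimately show "degree (lagp pt K (enc b)) < card (pt ` ?Z)" using cA cZ by linarith
  qed
  have injK: "inj_on pt {1..K}" by (rule inj_on_subset[OF inj]) (use Kn in auto)
  have "\<forall>p\<in>{1..K}. enc a p = enc b p"
  proof
    fix p assume p: "p \<in> {1..K}"
    have "enc a p = code pt K (enc a) p" using code_at_base[OF injK p] by simp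
    also have "\<dots> = poly (lagp pt K (enc a)) (pt p)" by (simp add: poly_lagp)
    also have "\<dots> = poly (lagp pt K (enc b)) (pt p)" using eq by simp
    also have "\<dots> = code pt K (enc b) p" by (simp add: poly_lagp)
    also have "\<dots> = enc b p" using code_at_base[OF injK p] by simp
    finally show "enc a p = enc b p" .
  qed
  then show False using encinj ab by blast
qed

lemma count_honest:
  fixes P H :: "nat set"
  assumes "P \<subseteq> {1..n}" "n - t \<le> card P" "H \<subseteq> {1..n}" "card ({1..n} - H) \<le> t"
  shows "card H \<le> card (P \<inter> H) + t"
proof -
  have "card P = card (P \<inter> H) + card (P - H)"
    using assms(1) by (metis card_Int_Diff finite_atLeastAtMost finite_subset)
  moreover have "card (P - H) \<le> card ({1..n} - H)"
    using assms(1) by (intro card_mono) auto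
  moreover have "card H + card ({1..n} - H) = n"
    using assms(3) by (metis card_Diff_subset card_mono diff_add_inverse2 finite_atLeastAtMost
        finite_subset le_add_diff_inverse2 add.commute card_atLeastAtMost diff_Suc_1)
  ultimately show ?thesis using assms(2,4) by linarith
qed

lemma key:
  fixes link rA rB :: "nat \<Rightarrow> nat \<Rightarrow> bool" and sA sB sC :: "nat \<Rightarrow> bool"
    and C :: "'m \<Rightarrow> nat \<Rightarrow> 'f" and w :: "nat \<Rightarrow> 'm"
  assumes Hsub: "H \<subseteq> {1..n}" and dis: "card ({1..n} - H) \<le> t"
    and lk: "\<And>i j. i \<in> H \<Longrightarrow> j \<in> H \<Longrightarrow> link i j \<Longrightarrow> j = i \<or> (C (w j) i = C (w i) i \<and> C (w j) j = C (w i) j)"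
    and s2d: "\<And>i. i \<in> H \<Longrightarrow> sB i \<Longrightarrow> sA i \<and> n - t \<le> card {j\<in>{1..n}. link i j \<and> rA i j}"
    and r1d: "\<And>i j. i \<in> H \<Longrightarrow> j \<in> H \<Longrightarrow> rA i j = sA j"
    and s3d: "\<And>i. i \<in> H \<Longrightarrow> sC i \<Longrightarrow> n - t \<le> card {j\<in>{1..n}. link i j \<and> rA i j \<and> rB i j}"
    and r2d: "\<And>i j. i \<in> H \<Longrightarrow> j \<in> H \<Longrightarrow> rB i j = sB j"
    and Zb: "card {j\<in>{1..n}. C a j = C b j} < K"
    and big: "2 * (K - 1) + t < card H"
    and img: "w ` {i\<in>H. sA i} = {a, b}" and ab: "a \<noteq> b"
    and x: "x \<in> H" "sC x" "w x = a"
  shows "card H \<le> card {j\<in>H. sA j \<and> w j = a} + t"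
proof -
  let ?Z = "{j\<in>{1..n}. C a j = C b j}"
  let ?S2a = "{j\<in>H. sB j \<and> w j = a}"
  let ?N3 = "{j\<in>{1..n}. link x j \<and> rA x j \<and> rB x j}"
  have fH: "finite H" using Hsub finite_subset by blast
  have wS1: "\<And>j. j \<in> H \<Longrightarrow> sA j \<Longrightarrow> w j = a \<or> w j = b" using img by blast
  have "card H \<le> card (?N3 \<inter> H) + t"
    by (rule count_honest[OF _ s3d[OF x(1,2)] Hsub dis]) auto
  moreover have "?N3 \<inter> H \<subseteq> ?S2a \<union> ?Z"
  proof
    fix j assume j: "j \<in> ?N3 \<inter> H"
    then have jH: "j \<in> H" and lj: "link x j" and s2j: "sB j" using r2d[OF x(1)] by auto
    then have "sA j" using s2d by blast
    then have "w j = a \<or> w j = b" using wS1 jH by blast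
    then show "j \<in> ?S2a \<union> ?Z"
    proof
      assume "w j = a" then show ?thesis using jH s2j by simp
    next
      assume wj: "w j = b"
      then have "j \<noteq> x" using x ab by auto
      then have "C (w j) j = C (w x) j" using lk[OF x(1) jH lj] by simp
      then show ?thesis using wj x(3) j by auto
    qed
  qed
  then have "card (?N3 \<inter> H) \<le> card (?S2a \<union> ?Z)" by (intro card_mono) (auto intro: finite_subset[OF _ fH])
  moreover have "card (?S2a \<union> ?Z) \<le> card ?S2a + card ?Z" by (rule card_Un_le)
  ultimately have "card ?Z < card ?S2a" using Zb big by linarith
  then have "\<not> ?S2a \<subseteq> ?Z" using card_mono[of ?Z ?S2a] by auto
  then obtain y where y: "y \<in> H" "sB y" "w y = a" "y \<notin> ?Z" by blast
  let ?N2 = "{j\<in>{1..n}. link y j \<and> rA y j}"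
  have "card H \<le> card (?N2 \<inter> H) + t"
    by (rule count_honest[OF _ conjunct2[OF s2d[OF y(1,2)]] Hsub dis]) auto
  moreover have "?N2 \<inter> H \<subseteq> {j\<in>H. sA j \<and> w j = a}"
  proof
    fix j assume j: "j \<in> ?N2 \<inter> H"
    then have jH: "j \<in> H" and lj: "link y j" and s1j: "sA j" using r1d[OF y(1)] by auto
    then have "w j = a \<or> w j = b" using wS1 jH by blast
    moreover have "w j \<noteq> b"
    proof
      assume wj: "w j = b"
      then have "j \<noteq> y" using y ab by auto
      then have "C (w j) y = C (w y) y" using lk[OF y(1) jH lj] by simp
      then show False using wj y Hsub by auto
    qed
    ultimately show "j \<in> {j\<in>H. sA j \<and> w j = a}" using jH s1j by auto
  qed
  then have "card (?N2 \<inter> H) \<le> card {j\<in>H. sA j \<and> w j = a}" by (intro card_mono) (auto intro: finite_subset[OF _ fH])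
  ultimately show ?thesis by linarith
qed

theorem lemma10:
  fixes n t :: nat
    and pt :: "nat \<Rightarrow> 'f::field"
    and enc :: "'m \<Rightarrow> nat \<Rightarrow> 'f"
    and w :: "nat \<Rightarrow> 'm"
    and H :: "nat set"
    and A1 :: "nat \<Rightarrow> nat \<Rightarrow> 'f \<times> 'f"
    and B1 B2 :: "nat \<Rightarrow> nat \<Rightarrow> bool"
  assumes "n \<ge> 3 * t + 1"
    and "inj_on pt {1..n}"
    and "\<forall>i\<in>{1..n}. pt i \<noteq> 0"
    and "\<forall>a b. (\<forall>p\<in>{1..t div 5 + 1}. enc a p = enc b p) \<longrightarrow> a = b"
    and "H \<subseteq> {1..n}"
    and "card ({1..n} - H) \<le> t"
    and "eta w H (cool_s1 n t pt enc w H A1) = 2"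
  shows "eta w H (cool_s3 n t pt enc w H A1 B1 B2) \<le> 1"
  proof -
  let ?K = "t div 5 + 1"
  let ?C = "\<lambda>m j. code pt ?K (enc m) j"
  let ?s1 = "cool_s1 n t pt enc w H A1"
  let ?s2 = "cool_s2 n t pt enc w H A1 B1"
  let ?s3 = "cool_s3 n t pt enc w H A1 B1 B2"
  let ?link = "cool_link1 t pt enc w H A1"
  let ?r1 = "cool_rec1 n t pt enc w H A1 B1"
  let ?r2 = "cool_rec2 n t pt enc w H A1 B1 B2"
  have fH: "finite H" using assms(5) finite_subset by blast
  have cardH: "card H + card ({1..n} - H) = n"
    using assms(5) by (metis card_Diff_subset card_mono diff_add_inverse2 finite_atLeastAtMost
        finite_subset le_add_diff_inverse2 add.commute card_atLeastAtMost diff_Suc_1)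
  have big: "2 * (?K - 1) + t < card H" using cardH assms(1,6) by linarith
  have lk: "\<And>i j. i \<in> H \<Longrightarrow> j \<in> H \<Longrightarrow> ?link i j \<Longrightarrow> j = i \<or> (?C (w j) i = ?C (w i) i \<and> ?C (w j) j = ?C (w i) j)"
    unfolding cool_link1_def cool_y_def kpar_def by auto
  have s2d: "\<And>i. i \<in> H \<Longrightarrow> ?s2 i \<Longrightarrow> ?s1 i \<and> n - t \<le> card {j\<in>{1..n}. ?link i j \<and> ?r1 i j}"
    unfolding cool_s2_def by blast
  have r1d: "\<And>i j. i \<in> H \<Longrightarrow> j \<in> H \<Longrightarrow> ?r1 i j = ?s1 j" unfolding cool_rec1_def by simp
  have s3d: "\<And>i. i \<in> H \<Longrightarrow> ?s3 i \<Longrightarrow> n - t \<le> card {j\<in>{1..n}. ?link i j \<and> ?r1 i j \<and> ?r2 i j}"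
    unfolding cool_s3_def by blast
  have r2d: "\<And>i j. i \<in> H \<Longrightarrow> j \<in> H \<Longrightarrow> ?r2 i j = ?s2 j" unfolding cool_rec2_def by simp
  have s31: "\<And>i. ?s3 i \<Longrightarrow> ?s1 i" unfolding cool_s3_def cool_s2_def by blast
  have "card (w ` {i\<in>H. ?s1 i}) = 2" using assms(7) unfolding eta_def .
  then obtain a b where img: "w ` {i\<in>H. ?s1 i} = {a, b}" and ab: "a \<noteq> b"
    by (meson card_2_iff)
  have Kn: "?K \<le> n" using assms(1) by linarith
  show ?thesis
  proof (rule ccontr)
    assume "\<not> ?thesis"
    then have c3: "2 \<le> card (w ` {i\<in>H. ?s3 i})" unfolding eta_def by simp
    have sub: "w ` {i\<in>H. ?s3 i} \<subseteq> {a, b}" using img s31 by blast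
    have "w ` {i\<in>H. ?s3 i} = {a, b}"
    proof (rule card_subset_eq[OF _ sub])
      have cab: "card {a, b} = 2" using ab by simp
      have "card (w ` {i\<in>H. ?s3 i}) \<le> 2" using card_mono[OF _ sub] cab by simp
      then show "card (w ` {i\<in>H. ?s3 i}) = card {a, b}" using c3 cab by simp
    qed simp
    then have ina: "a \<in> w ` {i\<in>H. ?s3 i}" and inb: "b \<in> w ` {i\<in>H. ?s3 i}" by auto
    from ina obtain xa where xa: "xa \<in> H" "?s3 xa" "w xa = a" by auto
    from inb obtain xb where xb: "xb \<in> H" "?s3 xb" "w xb = b" by auto
    have ZA: "card {j\<in>{1..n}. ?C a j = ?C b j} < ?K"
      using rs_bound[OF assms(2) Kn assms(4) ab] by simp
    have ZB: "card {j\<in>{1..n}. ?C b j = ?C a j} < ?K"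
      using rs_bound[OF assms(2) Kn assms(4) ab[symmetric]] by simp
    have imgb: "w ` {i\<in>H. ?s1 i} = {b, a}" using img by auto
    have ca: "card H \<le> card {j\<in>H. ?s1 j \<and> w j = a} + t"
      using key[where link="?link" and rA="?r1" and rB="?r2" and sA="?s1" and sB="?s2" and sC="?s3" and C="?C" and w=w and K="?K" and a=a and b=b and x=xa, OF assms(5,6) lk s2d r1d s3d r2d ZA big img ab xa] by simp
    have cb: "card H \<le> card {j\<in>H. ?s1 j \<and> w j = b} + t"
      using key[where link="?link" and rA="?r1" and rB="?r2" and sA="?s1" and sB="?s2" and sC="?s3" and C="?C" and w=w and K="?K" and a=b and b=a and x=xb, OF assms(5,6) lk s2d r1d s3d r2d ZB big imgb ab[symmetric] xb] by simp
    have "card ({j\<in>H. ?s1 j \<and> w j = a} \<union> {j\<in>H. ?s1 j \<and> w j = b})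
        = card {j\<in>H. ?s1 j \<and> w j = a} + card {j\<in>H. ?s1 j \<and> w j = b}"
      using ab fH by (intro card_Un_disjoint) auto
    moreover have "card ({j\<in>H. ?s1 j \<and> w j = a} \<union> {j\<in>H. ?s1 j \<and> w j = b}) \<le> card H"
      using fH by (intro card_mono) auto
    ultimately show False using ca cb cardH assms(1,6) by linarith
  qed
qed

end
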